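(* Assume the random gather-step setting below. For every Byzantine strategy $z=z(X)$ (the vectors $z^{(j)}$ being arbitrary functions of the delivering configuration $X$), $$\mathbb{E}_X\big[\Delta(\theta_1,\dots,\theta_h)\big]\le m\,\Delta(\lambda_1,\dots,\lambda_h)\quad\text{with } m=1-\frac{\rho}{4}<1 .$$
   Context: Median of reals: for $y_1,\dots,y_q\in\mathbb{R}$ with order statistics $y_{(1)}\le\dots\le y_{(q)}$, $\mathrm{median}=y_{((q+1)/2)}$ if $q$ is odd and $\frac12(y_{(q/2)}+y_{(q/2+1)})$ if $q$ is even; $\mathrm{Median}$ of vectors is applied coordinate-wise. Coordinate-wise diameters: $\Delta_i(v_1,\dots,v_h)=\max_{j,k}|v_j[i]-v_k[i]|$, $\Delta=\sum_{i=1}^d\Delta_i$. Random gather-step setting: integers $f\ge1$, $n$, $h=n-f$, and $q$ with $2f+2\le q\le\lfloor h/2\rfloor$; fixed vectors $\lambda_1,\dots,\lambda_h\in\mathbb{R}^d$ held by the correct servers $1,\dots,h$. Let $S_j=\{s\subset\{1,\dots,h\}\setminus\{j\}:|s|\in\{q-f-1,\dots,q-1\}\}$ and $S=\prod_{j=1}^hS_j$. A delivering configuration $X=(X_1,\dots,X_h)$ is a random element of $S$ with $P(X=s)\ge\rho$ for all $s\in S$, for some $\rho>0$. Given $X$, each correct server $j$ receives arbitrary vectors $z^{(j)}_1,\dots,z^{(j)}_{q-1-|X_j|}\in\mathbb{R}^d$ (possibly depending on $X$) and computes $\theta_j=\mathrm{Median}\big(\lambda_j,(\lambda_k)_{k\in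 X_j},z^{(j)}_1,\dots,z^{(j)}_{q-1-|X_j|}\big)$. *)

theory Defs
  imports "HOL-Probability.Probability"
begin

text \<open>Median of a finite list of reals (order statistics, 1-based in the paper).\<close>
definition median :: "real list \<Rightarrow> real" where
  "median ys = (let q = length ys; zs = sort ys in
     if odd q then zs ! (q div 2)
     else (zs ! (q div 2 - 1) + zs ! (q div 2)) / 2)"

definition Median :: "(real ^ 'd) list \<Rightarrow> real ^ 'd" where
  "Median vs = (\<chi> i. median (map (\<lambda>v. v $ i) vs))"

definition Delta_i :: "nat \<Rightarrow> (nat \<Rightarrow> real ^ 'd) \<Rightarrow> 'd \<Rightarrow> real" where
  "Delta_i h v i = Max {\<bar>v j $ i - v k $ i\<bar> | j k. j \<in> {1..h} \<and> k \<in> {1..h}}"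

definition Delta :: "nat \<Rightarrow> (nat \<Rightarrow> real ^ 'd) \<Rightarrow> real" where
  "Delta h v = (\<Sum>i\<in>UNIV. Delta_i h v i)"

definition S_j :: "nat \<Rightarrow> nat \<Rightarrow> nat \<Rightarrow> nat \<Rightarrow> nat set set" where
  "S_j f q h j = {s. s \<subseteq> {1..h} - {j} \<and> card s \<in> {q - f - 1..q - 1}}"

definition S_conf :: "nat \<Rightarrow> nat \<Rightarrow> nat \<Rightarrow> (nat \<Rightarrow> nat set) set" where
  "S_conf f q h = PiE {1..h} (S_j f q h)"

text \<open>Output of correct server j, given configuration X and Byzantine vectors z X j t
  (t = 1, ..., q - 1 - |X j|).\<close>
definition theta ::
  "nat \<Rightarrow> (nat \<Rightarrow> real ^ 'd) \<Rightarrow> ((nat \<Rightarrow> nat set) \<Rightarrow> nat \<Rightarrow> nat \<Rightarrow> real ^ 'd)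
     \<Rightarrow> (nat \<Rightarrow> nat set) \<Rightarrow> nat \<Rightarrow> real ^ 'd" where
  "theta q lam z X j = Median (lam j # map lam (sorted_list_of_set (X j))
       @ map (z X j) [1..<q - card (X j)])"

end

theory Submission
  imports Defs
begin

lemma sort_nth_le:
  fixes ys :: "real list"
  assumes "k < length ys" "length (filter (\<lambda>x. x \<le> b) ys) \<ge> Suc k"
  shows "sort ys ! k \<le> b"
proof (rule ccontr)
  assume c: "\<not> sort ys ! k \<le> b"
  define zs where "zs = sort ys"
  have s: "sorted zs" and l: "length zs = length ys" by (simp_all add: zs_def)
  have all: "\<forall>x\<in>set (drop k zs). \<not> x \<le> b"
  proof
    fix x assume "x \<in> set (drop k zs)"
    then obtain m where m: "m < length zs - k" "x = drop k zs ! m" by (auto simp: in_set_conv_nth)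
    have "zs ! k \<le> zs ! (k + m)" using s m by (intro sorted_nth_mono) auto
    then show "\<not> x \<le> b" using c m by (auto simp: zs_def)
  qed
  have "filter (\<lambda>x. x \<le> b) zs = filter (\<lambda>x. x \<le> b) (take k zs) @ filter (\<lambda>x. x \<le> b) (drop k zs)"
    by (metis append_take_drop_id filter_append)
  also have "filter (\<lambda>x. x \<le> b) (drop k zs) = []" using all by (simp add: filter_empty_conv)
  finally have "length (filter (\<lambda>x. x \<le> b) zs) \<le> k"
    by (metis append_Nil2 length_filter_le length_take min.absorb_iff2 order.trans le_cases)
  moreover have "length (filter (\<lambda>x. x \<le> b) zs) = length (filter (\<lambda>x. x \<le> b) ys)"
    unfolding zs_def by (metis mset_filter mset_sort size_mset)
  ultimately show False using assms by simp
qed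

lemma sort_nth_ge:
  fixes ys :: "real list"
  assumes "k < length ys" "length (filter (\<lambda>x. x < a) ys) \<le> k"
  shows "a \<le> sort ys ! k"
proof (rule ccontr)
  assume c: "\<not> a \<le> sort ys ! k"
  define zs where "zs = sort ys"
  have s: "sorted zs" and l: "length zs = length ys" by (simp_all add: zs_def)
  have all: "\<forall>x\<in>set (take (Suc k) zs). x < a"
  proof
    fix x assume "x \<in> set (take (Suc k) zs)"
    then obtain m where m: "m < Suc k" "m < length zs" "x = zs ! m" by (auto simp: in_set_conv_nth)
    have "zs ! m \<le> zs ! k" using s m assms(1) l by (intro sorted_nth_mono) auto
    then show "x < a" using c m by (auto simp: zs_def)
  qed
  have "filter (\<lambda>x. x < a) zs = filter (\<lambda>x. x < a) (take (Suc k) zs) @ filter (\<lambda>x. x < a) (drop (Suc k) zs)"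
    by (metis append_take_drop_id filter_append)
  also have "filter (\<lambda>x. x < a) (take (Suc k) zs) = take (Suc k) zs" using all by simp
  finally have "length (filter (\<lambda>x. x < a) zs) \<ge> Suc k" using assms(1) l by simp
  moreover have "length (filter (\<lambda>x. x < a) zs) = length (filter (\<lambda>x. x < a) ys)"
    unfolding zs_def by (metis mset_filter mset_sort size_mset)
  ultimately show False using assms by simp
qed

lemma median_bound:
  fixes ys :: "real list"
  assumes "length ys = q" "2 * f + 2 \<le> q"
    "length (filter (\<lambda>x. x \<le> b) ys) + f \<ge> q"
    "length (filter (\<lambda>x. x < a) ys) \<le> f"
  shows "a \<le> median ys \<and> median ys \<le> b"
proof -
  have k1: "sort ys ! k \<le> b \<and> a \<le> sort ys ! k" if "q div 2 - 1 \<le> k" "k \<le> q div 2" for k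
    using assms that by (intro conjI sort_nth_le sort_nth_ge) auto
  show ?thesis
    using k1[of "q div 2"] k1[of "q div 2 - 1"] assms(1)
    by (auto simp: median_def Let_def)
qed


lemma Delta_i_set: "{\<bar>v j $ i - v k $ i\<bar> | j k. j \<in> {1..h} \<and> k \<in> {1..h}}
   = (\<lambda>(j,k). \<bar>v j $ i - v k $ i\<bar>) ` ({1..h} \<times> {1..h})"
  by (auto simp: image_iff) force

lemma Delta_i_le:
  assumes "h \<ge> 1" "\<forall>j\<in>{1..h}. a \<le> v j $ i \<and> v j $ i \<le> b"
  shows "Delta_i h v i \<le> b - a"
  unfolding Delta_i_def Delta_i_set
proof (subst Max_le_iff)
  show "finite ((\<lambda>(j, k). \<bar>v j $ i - v k $ i\<bar>) ` ({1..h} \<times> {1..h}))" by simp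
  show "(\<lambda>(j, k). \<bar>v j $ i - v k $ i\<bar>) ` ({1..h} \<times> {1..h}) \<noteq> {}" using assms by auto
  show "\<forall>x\<in>(\<lambda>(j, k). \<bar>v j $ i - v k $ i\<bar>) ` ({1..h} \<times> {1..h}). x \<le> b - a"
  proof
    fix x assume "x \<in> (\<lambda>(j, k). \<bar>v j $ i - v k $ i\<bar>) ` ({1..h} \<times> {1..h})"
    then obtain j k where "j \<in> {1..h}" "k \<in> {1..h}" "x = \<bar>v j $ i - v k $ i\<bar>" by auto
    then show "x \<le> b - a" using assms(2) by (smt (verit))
  qed
qed

lemma Delta_i_ge:
  assumes "j \<in> {1..h}" "k \<in> {1..h}"
  shows "\<bar>v j $ i - v k $ i\<bar> \<le> Delta_i h v i"
  unfolding Delta_i_def Delta_i_set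
  using assms by (intro Max_ge) auto

lemma theta_coord: "theta q lam z X j $ i = median (map (\<lambda>v. v$i) (lam j # map lam (sorted_list_of_set (X j)))
   @ map (\<lambda>v. v$i) (map (z X j) [1..<q - card (X j)]))"
  by (simp add: theta_def Median_def)


lemma theta_bound_gen:
  fixes lam :: "nat \<Rightarrow> real ^ 'd"
  assumes "j \<in> {1..h}" "X j \<subseteq> {1..h}" "q - f - 1 \<le> card (X j)" "card (X j) \<le> q - 1"
    "2 * f + 2 \<le> q" "\<forall>k\<in>{1..h}. a \<le> lam k $ i \<and> lam k $ i \<le> b"
  shows "a \<le> theta q lam z X j $ i \<and> theta q lam z X j $ i \<le> b"
proof -
  define L1 where "L1 = map (\<lambda>v. v$i) (lam j # map lam (sorted_list_of_set (X j)))"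
  define L2 where "L2 = map (\<lambda>v. v$i) (map (z X j) [1..<q - card (X j)])"
  have fin: "finite (X j)" using assms(2) finite_subset by blast
  have setL1: "\<forall>x\<in>set L1. a \<le> x \<and> x \<le> b" using assms fin by (auto simp: L1_def)
  have lL1: "length L1 = Suc (card (X j))" by (simp add: L1_def)
  have lL2: "length L2 = q - card (X j) - 1" by (simp add: L2_def)
  have f1: "filter (\<lambda>x. x \<le> b) L1 = L1" using setL1 by simp
  have f2: "filter (\<lambda>x. x < a) L1 = []" using setL1 by (auto simp: filter_empty_conv)
  have "a \<le> median (L1 @ L2) \<and> median (L1 @ L2) \<le> b"
  proof (rule median_bound[where q=q and f=f])
    show "length (L1 @ L2) = q" using lL1 lL2 assms by simp
    show "2 * f + 2 \<le> q" by fact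
    show "q \<le> length (filter (\<lambda>x. x \<le> b) (L1 @ L2)) + f" using f1 lL1 assms by simp
    have "length (filter (\<lambda>x. x < a) L2) \<le> length L2" by simp
    then show "length (filter (\<lambda>x. x < a) (L1 @ L2)) \<le> f" using f2 lL2 assms by simp
  qed
  then show ?thesis by (simp add: theta_coord L1_def L2_def)
qed

lemma theta_bound_spec:
  fixes lam :: "nat \<Rightarrow> real ^ 'd"
  assumes "finite (X j)" "card (X j) = q - 1" "4 \<le> q"
    "\<forall>k\<in>X j. lo \<le> lam k $ i \<and> lam k $ i \<le> hi"
  shows "lo \<le> theta q lam z X j $ i \<and> theta q lam z X j $ i \<le> hi"
proof -
  define L1 where "L1 = map (\<lambda>v. v$i) (map lam (sorted_list_of_set (X j)))"
  have setL1: "\<forall>x\<in>set L1. lo \<le> x \<and> x \<le> hi" using assms by (auto simp: L1_def)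
  have lL1: "length L1 = q - 1" using assms by (simp add: L1_def)
  have f1: "filter (\<lambda>x. x \<le> hi) L1 = L1" using setL1 by simp
  have f2: "filter (\<lambda>x. x < lo) L1 = []" using setL1 by (auto simp: filter_empty_conv)
  have e: "q - card (X j) = 1" using assms by simp
  have "lo \<le> median (lam j $ i # L1) \<and> median (lam j $ i # L1) \<le> hi"
  proof (rule median_bound[where q=q and f=1])
    show "length (lam j $ i # L1) = q" using lL1 assms by simp
    show "2 * 1 + 2 \<le> q" using assms by simp
    show "q \<le> length (filter (\<lambda>x. x \<le> hi) (lam j $ i # L1)) + 1" using f1 lL1 assms by simp
    show "length (filter (\<lambda>x. x < lo) (lam j $ i # L1)) \<le> 1" using f2 by simp
  qed
  then show ?thesis by (simp add: theta_coord L1_def e)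
qed


lemma finite_S_conf: "finite (S_conf f q h)"
  unfolding S_conf_def
proof (rule finite_PiE)
  fix j show "finite (S_j f q h j)"
    by (rule finite_subset[of _ "Pow {1..h}"]) (auto simp: S_j_def)
qed simp

lemma good_from_C:
  fixes lam :: "nat \<Rightarrow> real ^ 'd"
  assumes "C \<subseteq> {1..h}" "card C = q" "4 \<le> q" "2 * f + 2 \<le> q" "h \<ge> 1"
    "\<forall>k\<in>C. lo \<le> lam k $ i \<and> lam k $ i \<le> hi"
  shows "\<exists>s\<in>S_conf f q h. Delta_i h (theta q lam z s) i \<le> hi - lo"
proof -
  have finC: "finite C" using assms(1) finite_subset by blast
  have neC: "C \<noteq> {}" using assms by auto
  define x0 where "x0 = (SOME x. x \<in> C)"
  have x0: "x0 \<in> C" unfolding x0_def using neC by (simp add: some_in_eq)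
  define s where "s = (\<lambda>j. if j \<in> {1..h} then (if j \<in> C then C - {j} else C - {x0}) else undefined)"
  have sj: "s j \<subseteq> C \<and> s j \<subseteq> {1..h} - {j} \<and> card (s j) = q - 1 \<and> finite (s j)" if "j \<in> {1..h}" for j
    using that assms(1,2) finC x0 by (auto simp: s_def)
  have "s \<in> S_conf f q h"
    unfolding S_conf_def PiE_iff
  proof
    show "\<forall>j\<in>{1..h}. s j \<in> S_j f q h j" using sj by (auto simp: S_j_def)
    show "s \<in> extensional {1..h}" by (auto simp: s_def extensional_def)
  qed
  moreover have "Delta_i h (theta q lam z s) i \<le> hi - lo"
  proof (rule Delta_i_le)
    show "1 \<le> h" by fact
    show "\<forall>j\<in>{1..h}. lo \<le> theta q lam z s j $ i \<and> theta q lam z s j $ i \<le> hi"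
    proof
      fix j assume j: "j \<in> {1..h}"
      show "lo \<le> theta q lam z s j $ i \<and> theta q lam z s j $ i \<le> hi"
        using sj[OF j] assms(3,6) by (intro theta_bound_spec) auto
    qed
  qed
  ultimately show ?thesis by blast
qed

lemma good_exists:
  fixes lam :: "nat \<Rightarrow> real ^ 'd"
  assumes "4 \<le> q" "2 * f + 2 \<le> q" "2 * q \<le> h"
    "\<forall>k\<in>{1..h}. a \<le> lam k $ i \<and> lam k $ i \<le> b"
  shows "\<exists>s\<in>S_conf f q h. Delta_i h (theta q lam z s) i \<le> (b - a) / 2"
proof -
  define m where "m = (a + b) / 2"
  define L where "L = {k\<in>{1..h}. lam k $ i \<le> m}"
  define U where "U = {k\<in>{1..h}. m \<le> lam k $ i}"
  have "L \<union> U = {1..h}" by (auto simp: L_def U_def)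
  then have "h \<le> card L + card U" by (metis card_Un_le card_atLeastAtMost diff_Suc_1)
  then have "q \<le> card L \<or> q \<le> card U" using assms by linarith
  then show ?thesis
  proof
    assume "q \<le> card L"
    then obtain C where C: "C \<subseteq> L" "card C = q" by (metis obtain_subset_with_card_n)
    have "\<exists>s\<in>S_conf f q h. Delta_i h (theta q lam z s) i \<le> m - a"
      using C assms by (intro good_from_C) (auto simp: L_def)
    then show ?thesis by (simp add: m_def field_simps)
  next
    assume "q \<le> card U"
    then obtain C where C: "C \<subseteq> U" "card C = q" by (metis obtain_subset_with_card_n)
    have "\<exists>s\<in>S_conf f q h. Delta_i h (theta q lam z s) i \<le> b - m"
      using C assms by (intro good_from_C) (auto simp: U_def)
    then show ?thesis by (simp add: m_def field_simps)
  qed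
qed


lemma coord_bound:
  fixes lam :: "nat \<Rightarrow> real ^ 'd" and P :: "(nat \<Rightarrow> nat set) pmf"
  assumes "4 \<le> q" "2 * f + 2 \<le> q" "2 * q \<le> h" "\<rho> > 0"
    "set_pmf P \<subseteq> S_conf f q h" "\<forall>s\<in>S_conf f q h. pmf P s \<ge> \<rho>"
  shows "(\<Sum>X\<in>S_conf f q h. pmf P X * Delta_i h (theta q lam z X) i) \<le> (1 - \<rho> / 2) * Delta_i h lam i"
proof -
  define A where "A = S_conf f q h"
  have finA: "finite A" by (simp add: A_def finite_S_conf)
  define V where "V = (\<lambda>k. lam k $ i) ` {1..h}"
  have finV: "finite V" "V \<noteq> {}" using assms by (auto simp: V_def)
  define a where "a = Min V"
  define b where "b = Max V"
  have ab: "\<forall>k\<in>{1..h}. a \<le> lam k $ i \<and> lam k $ i \<le> b"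
    using finV by (auto simp: a_def b_def V_def)
  obtain j0 where j0: "j0 \<in> {1..h}" "lam j0 $ i = a"
    using Min_in[OF finV] by (auto simp: a_def V_def)
  obtain k0 where k0: "k0 \<in> {1..h}" "lam k0 $ i = b"
    using Max_in[OF finV] by (auto simp: b_def V_def)
  define D where "D = Delta_i h lam i"
  have D1: "b - a \<le> D" using Delta_i_ge[OF k0(1) j0(1), of lam i] j0 k0 by (simp add: D_def)
  have D2: "D \<le> b - a" unfolding D_def using ab assms by (intro Delta_i_le) auto
  have h1: "1 \<le> h" using assms by simp
  define g where "g = (\<lambda>X. Delta_i h (theta q lam z X) i)"
  have gle: "g X \<le> D" if "X \<in> A" for X
  proof -
    have "g X \<le> b - a" unfolding g_def
    proof (rule Delta_i_le[OF h1], rule ballI)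
      fix j assume j: "j \<in> {1..h}"
      have "X j \<in> S_j f q h j" using that j by (auto simp: A_def S_conf_def PiE_iff)
      then show "a \<le> theta q lam z X j $ i \<and> theta q lam z X j $ i \<le> b"
        using j ab assms by (intro theta_bound_gen[where f=f and h=h]) (auto simp: S_j_def)
    qed
    then show ?thesis using D1 by simp
  qed
  obtain s where s: "s \<in> A" "g s \<le> (b - a) / 2"
    using good_exists[OF assms(1-3) ab, of z] by (auto simp: A_def g_def)
  have ps: "pmf P s \<ge> \<rho>" using s assms by (auto simp: A_def)
  have sum1: "(\<Sum>X\<in>A. pmf P X) = 1" using finA assms by (intro sum_pmf_eq_1) (auto simp: A_def)
  have "(\<Sum>X\<in>A. pmf P X * g X) = pmf P s * g s + (\<Sum>X\<in>A - {s}. pmf P X * g X)"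
    using finA s by (simp add: sum.remove)
  also have "\<dots> \<le> pmf P s * (D / 2) + (\<Sum>X\<in>A - {s}. pmf P X * D)"
    using s D1 gle by (intro add_mono sum_mono mult_left_mono) auto
  also have "(\<Sum>X\<in>A - {s}. pmf P X * D) = D * (1 - pmf P s)"
  proof -
    have "(\<Sum>X\<in>A - {s}. pmf P X * D) = (\<Sum>X\<in>A - {s}. pmf P X) * D" by (simp add: sum_distrib_right)
    also have "(\<Sum>X\<in>A - {s}. pmf P X) = 1 - pmf P s" using sum1 finA s by (simp add: sum_diff1)
    finally show ?thesis by simp
  qed
  also have "pmf P s * (D / 2) + D * (1 - pmf P s) = D - pmf P s * D / 2" by (simp add: algebra_simps)
  also have "\<dots> \<le> D - \<rho> * D / 2"
    using ps D1 Delta_i_ge[OF j0(1) j0(1), of lam i] by (simp add: D_def mult_right_mono divide_right_mono)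
  finally show ?thesis by (simp add: A_def g_def D_def algebra_simps)
qed


theorem mainTheorem6:
  fixes f n h q :: nat and \<rho> :: real
    and lam :: "nat \<Rightarrow> real ^ 'd"
    and P :: "(nat \<Rightarrow> nat set) pmf"
    and z :: "(nat \<Rightarrow> nat set) \<Rightarrow> nat \<Rightarrow> nat \<Rightarrow> real ^ 'd"
  assumes "f \<ge> 1" and "h = n - f"
    and "2 * f + 2 \<le> q" and "q \<le> h div 2"
    and "\<rho> > 0"
    and "set_pmf P \<subseteq> S_conf f q h"
    and "\<forall>s\<in>S_conf f q h. pmf P s \<ge> \<rho>"
  shows "measure_pmf.expectation P (\<lambda>X. Delta h (theta q lam z X))
           \<le> (1 - \<rho> / 4) * Delta h lam
         \<and> 1 - \<rho> / 4 < 1"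
proof
  show "1 - \<rho> / 4 < 1" using assms by simp
  define A where "A = S_conf f q h"
  have q4: "4 \<le> q" and h2: "2 * q \<le> h" using assms by auto
  have "measure_pmf.expectation P (\<lambda>X. Delta h (theta q lam z X))
      = (\<Sum>X\<in>A. pmf P X *\<^sub>R Delta h (theta q lam z X))"
    using assms by (intro integral_measure_pmf) (auto simp: A_def finite_S_conf)
  also have "\<dots> = (\<Sum>i\<in>UNIV. \<Sum>X\<in>A. pmf P X * Delta_i h (theta q lam z X) i)"
    by (simp add: Delta_def sum_distrib_left sum.swap[of _ A])
  also have "\<dots> \<le> (\<Sum>i\<in>UNIV. (1 - \<rho> / 2) * Delta_i h lam i)"
    unfolding A_def using assms q4 h2 by (intro sum_mono coord_bound) auto
  also have "\<dots> = (1 - \<rho> / 2) * Delta h lam" by (simp add: Delta_def sum_distrib_left)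
  also have "\<dots> \<le> (1 - \<rho> / 4) * Delta h lam"
  proof -
    have "Delta h lam \<ge> 0" unfolding Delta_def
      by (intro sum_nonneg) (metis Delta_i_ge abs_ge_zero order.trans atLeastAtMost_iff h2 q4 le_refl
          order.trans[of 1 4 q] one_le_numeral mult_le_mono2 le_trans mult_2 le_add1)
    then show ?thesis using assms by (intro mult_right_mono) auto
  qed
  finally show "measure_pmf.expectation P (\<lambda>X. Delta h (theta q lam z X)) \<le> (1 - \<rho> / 4) * Delta h lam" .
qed

end
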